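(* Let $f_1,\dots,f_m:\mathbb R^n\to\mathbb R$ be continuously differentiable with $\nabla f_j$ being $L_j$-Lipschitz, and set $L=\max_j L_j$. Let $\tau>0$, $x,y\in\mathbb R^n$, and let $$\lambda_\tau(x,y)\in\operatorname*{argmin}_{\lambda\in\Delta_m}\Big\{\langle\lambda,F(x)-F(y)\rangle+\frac{\tau}{2}\|DF(y)\lambda\|^2\Big\}$$ be any minimizer. Then $$\Big\|DF(y)\lambda_\tau(x,y)-\mathrm{proj}_{C(y)}\Big(\frac{y-x}{\tau}\Big)\Big\|\le\sqrt{\frac{2L}{\tau}}\,\|x-y\|.$$
   Context: $F=(f_1,\dots,f_m)^\top$. $\Delta_m=\{\lambda\in\mathbb R^m_{\ge0}:\sum_j\lambda_j=1\}$ is the unit simplex. $DF(y)=[\nabla f_1(y),\dots,\nabla f_m(y)]\in\mathbb R^{n\times m}$, so $DF(y)\lambda=\sum_j\lambda_j\nabla f_j(y)$. $C(y)=\mathrm{conv}\{\nabla f_1(y),\dots,\nabla f_m(y)\}$, and $\mathrm{proj}_C(v)$ is the Euclidean projection of $v$ onto the closed convex set $C$. *)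

theory Defs
  imports "HOL-Analysis.Analysis"
begin

definition unit_simplex :: "nat \<Rightarrow> (nat \<Rightarrow> real) set" where
  "unit_simplex m = {lam. (\<forall>j<m. 0 \<le> lam j) \<and> (\<Sum>j<m. lam j) = 1}"

definition DF_mult :: "nat \<Rightarrow> (nat \<Rightarrow> 'a \<Rightarrow> 'a::real_vector) \<Rightarrow> 'a \<Rightarrow> (nat \<Rightarrow> real) \<Rightarrow> 'a" where
  "DF_mult m g y lam = (\<Sum>j<m. lam j *\<^sub>R g j y)"

definition grad_hull :: "nat \<Rightarrow> (nat \<Rightarrow> 'a \<Rightarrow> 'a::real_vector) \<Rightarrow> 'a \<Rightarrow> 'a set" where
  "grad_hull m g y = convex hull ((\<lambda>j. g j y) ` {..<m})"

definition subobj :: "nat \<Rightarrow> (nat \<Rightarrow> 'a \<Rightarrow> real) \<Rightarrow> (nat \<Rightarrow> 'a \<Rightarrow> 'a::real_inner) \<Rightarrow> real \<Rightarrow> 'a \<Rightarrow> 'a \<Rightarrow> (nat \<Rightarrow> real) \<Rightarrow> real" where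
  "subobj m f g tau x y lam = (\<Sum>j<m. lam j * (f j x - f j y)) + tau / 2 * (norm (DF_mult m g y lam))\<^sup>2"

end

theory Submission
  imports Defs
begin

lemma descent:
  fixes f :: "'a::real_inner \<Rightarrow> real" and g :: "'a \<Rightarrow> 'a"
  assumes der: "\<And>z. (f has_derivative (\<lambda>h. g z \<bullet> h)) (at z)"
    and lip: "L-lipschitz_on UNIV g"
  shows "\<bar>f x - f y - g y \<bullet> (x - y)\<bar> \<le> L / 2 * (norm (x - y))\<^sup>2"
proof -
  define d where "d = x - y"
  define h where "h t = f (y + t *\<^sub>R d) - t * (g y \<bullet> d)" for t :: real
  have L0: "0 \<le> L" using lip by (simp add: lipschitz_on_def)
  have hder: "(h has_real_derivative (g (y + t *\<^sub>R d) \<bullet> d - g y \<bullet> d)) (at t)" for t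
  proof -
    have l: "((\<lambda>t. y + t *\<^sub>R d) has_derivative (\<lambda>s. s *\<^sub>R d)) (at t)"
      by (auto intro!: derivative_eq_intros)
    have "((\<lambda>t. f (y + t *\<^sub>R d)) has_derivative (\<lambda>s. g (y + t *\<^sub>R d) \<bullet> (s *\<^sub>R d))) (at t)"
      using has_derivative_compose[OF l der] by (simp add: o_def)
    then have "((\<lambda>t. f (y + t *\<^sub>R d)) has_real_derivative (g (y + t *\<^sub>R d) \<bullet> d)) (at t)"
      unfolding has_field_derivative_def
    proof -
      assume a: "((\<lambda>t. f (y + t *\<^sub>R d)) has_derivative (\<lambda>s. g (y + t *\<^sub>R d) \<bullet> (s *\<^sub>R d))) (at t)"
      have "(\<lambda>s. g (y + t *\<^sub>R d) \<bullet> (s *\<^sub>R d)) = (*) (g (y + t *\<^sub>R d) \<bullet> d)"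
        by (auto simp: fun_eq_iff)
      with a show "((\<lambda>t. f (y + t *\<^sub>R d)) has_derivative (*) (g (y + t *\<^sub>R d) \<bullet> d)) (at t)" by simp
    qed
    then show ?thesis unfolding h_def
      by (auto intro!: derivative_eq_intros)
  qed
  have bnd: "\<bar>g (y + t *\<^sub>R d) \<bullet> d - g y \<bullet> d\<bar> \<le> L * t * (norm d)\<^sup>2" if "0 \<le> t" for t
  proof -
    have "\<bar>g (y + t *\<^sub>R d) \<bullet> d - g y \<bullet> d\<bar> = \<bar>(g (y + t *\<^sub>R d) - g y) \<bullet> d\<bar>"
      by (simp add: inner_diff_left)
    also have "\<dots> \<le> norm (g (y + t *\<^sub>R d) - g y) * norm d" by (rule Cauchy_Schwarz_ineq2)
    also have "norm (g (y + t *\<^sub>R d) - g y) \<le> L * norm (t *\<^sub>R d)"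
      using lip unfolding lipschitz_on_def dist_norm by (metis UNIV_I add_diff_cancel_left')
    then have "norm (g (y + t *\<^sub>R d) - g y) * norm d \<le> L * norm (t *\<^sub>R d) * norm d"
      by (simp add: mult_right_mono)
    also have "\<dots> = L * t * (norm d)\<^sup>2" using that by (simp add: power2_eq_square)
    finally show ?thesis .
  qed
  define k1 where "k1 t = h t - L / 2 * t\<^sup>2 * (norm d)\<^sup>2" for t
  define k2 where "k2 t = h t + L / 2 * t\<^sup>2 * (norm d)\<^sup>2" for t
  have "k1 1 \<le> k1 0"
  proof (rule DERIV_nonpos_imp_nonincreasing[of 0 1])
    fix t :: real assume t: "0 \<le> t" "t \<le> 1"
    show "\<exists>y. (k1 has_real_derivative y) (at t) \<and> y \<le> 0"
      apply (rule exI[of _ "(g (y + t *\<^sub>R d) \<bullet> d - g y \<bullet> d) - L * t * (norm d)\<^sup>2"])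
      using bnd[OF t(1)] unfolding k1_def
      by (auto intro!: derivative_eq_intros hder simp: field_simps power2_eq_square)
  qed simp
  moreover have "k2 0 \<le> k2 1"
  proof (rule DERIV_nonneg_imp_nondecreasing[of 0 1])
    fix t :: real assume t: "0 \<le> t" "t \<le> 1"
    show "\<exists>y. (k2 has_real_derivative y) (at t) \<and> 0 \<le> y"
      apply (rule exI[of _ "(g (y + t *\<^sub>R d) \<bullet> d - g y \<bullet> d) + L * t * (norm d)\<^sup>2"])
      using bnd[OF t(1)] unfolding k2_def
      by (auto intro!: derivative_eq_intros hder simp: field_simps power2_eq_square)
  qed simp
  ultimately have "f x - g y \<bullet> (x-y) - L/2*(norm(x-y))\<^sup>2 \<le> f y"
     "f y \<le> f x - g y \<bullet> (x-y) + L/2*(norm(x-y))\<^sup>2"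
    unfolding k1_def k2_def h_def d_def by simp_all
  then show ?thesis unfolding abs_le_iff by (intro conjI; linarith)
qed

lemma alg:
  fixes S R P M N E t :: real
  assumes "S = R - P" "M = N - 2/t*P + E/t\<^sup>2" "t > 0"
  shows "S + t/2*N = t/2*M - E/(2*t) + R"
proof -
  have "t/2*M = t/2*N - P + E/(2*t)" using assms(2,3) by (simp add: field_simps power2_eq_square)
  then show ?thesis using assms(1) by linarith
qed

theorem mainTheorem3:
  fixes m :: nat
    and f :: "nat \<Rightarrow> real ^ 'n \<Rightarrow> real"
    and g :: "nat \<Rightarrow> real ^ 'n \<Rightarrow> real ^ 'n"
    and Lj :: "nat \<Rightarrow> real"
    and tau :: real
    and x y :: "real ^ 'n"
    and lam :: "nat \<Rightarrow> real"
  assumes m_pos: "m \<ge> 1"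
    and grad: "\<And>j z. j < m \<Longrightarrow> (f j has_derivative (\<lambda>h. g j z \<bullet> h)) (at z)"
    and grad_cont: "\<And>j. j < m \<Longrightarrow> continuous_on UNIV (g j)"
    and lip: "\<And>j. j < m \<Longrightarrow> (Lj j)-lipschitz_on UNIV (g j)"
    and tau_pos: "tau > 0"
    and lam_simplex: "lam \<in> unit_simplex m"
    and lam_min: "\<And>mu. mu \<in> unit_simplex m \<Longrightarrow> subobj m f g tau x y lam \<le> subobj m f g tau x y mu"
  shows "norm (DF_mult m g y lam - closest_point (grad_hull m g y) ((1 / tau) *\<^sub>R (y - x)))
           \<le> sqrt (2 * Max (Lj ` {..<m}) / tau) * norm (x - y)"
proof -
  define L where "L = Max (Lj ` {..<m})"
  define C where "C = grad_hull m g y"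
  define a where "a = (1 / tau) *\<^sub>R (y - x)"
  define p where "p = closest_point C a"
  define v where "v = DF_mult m g y lam"
  define D where "D = {DF_mult m g y mu | mu. mu \<in> unit_simplex m}"
  have Lj_le: "Lj j \<le> L" if "j < m" for j
    unfolding L_def using that by (intro Max_ge) auto
  have L0: "0 \<le> L" using Lj_le[of 0] lip[of 0] m_pos by (simp add: lipschitz_on_def)
  have Cne: "C \<noteq> {}" unfolding C_def grad_hull_def using m_pos by (auto simp: lessThan_empty_iff)
  have Cclosed: "closed C" unfolding C_def grad_hull_def
    by (intro compact_imp_closed compact_convex_hull finite_imp_compact) auto
  have Cconv: "convex C" unfolding C_def grad_hull_def by simp
  have pC: "p \<in> C" unfolding p_def using closest_point_in_set[OF Cclosed Cne] .
  have vC: "v \<in> C" unfolding v_def DF_mult_def C_def grad_hull_def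
    using lam_simplex unfolding unit_simplex_def
    by (intro convex_sum) (auto intro: hull_inc)
  have "C \<subseteq> D" unfolding C_def grad_hull_def
  proof (rule hull_minimal)
    show "(\<lambda>j. g j y) ` {..<m} \<subseteq> D"
    proof
      fix z assume "z \<in> (\<lambda>j. g j y) ` {..<m}"
      then obtain j where j: "j < m" "z = g j y" by auto
      define mu where "mu i = (if i = j then 1 else 0::real)" for i
      have m1: "mu \<in> unit_simplex m" using j unfolding unit_simplex_def mu_def by auto
      have s1: "(\<Sum>i<m. mu i *\<^sub>R g i y) = (\<Sum>i<m. if i = j then g i y else 0)"
        by (rule sum.cong) (auto simp: mu_def)
      have m2: "DF_mult m g y mu = z" using j s1 unfolding DF_mult_def by simp
      show "z \<in> D" unfolding D_def using m1 m2 by blast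
    qed
    show "convex D" unfolding convex_def D_def
    proof (clarify)
      fix u w :: real and mu nu
      assume uw: "0 \<le> u" "0 \<le> w" "u + w = 1" and mu: "mu \<in> unit_simplex m" and nu: "nu \<in> unit_simplex m"
      define ka where "ka i = u * mu i + w * nu i" for i
      have "ka \<in> unit_simplex m" using uw mu nu unfolding unit_simplex_def ka_def
        by (auto simp: sum.distrib sum_distrib_left[symmetric])
      moreover have "DF_mult m g y ka = u *\<^sub>R DF_mult m g y mu + w *\<^sub>R DF_mult m g y nu"
        unfolding DF_mult_def ka_def
        by (simp add: scaleR_sum_right scaleR_add_left sum.distrib)
      ultimately show "\<exists>mua. u *\<^sub>R DF_mult m g y mu + w *\<^sub>R DF_mult m g y nu = DF_mult m g y mua \<and> mua \<in> unit_simplex m"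
        by metis
    qed
  qed
  with pC obtain mu where mu: "mu \<in> unit_simplex m" "p = DF_mult m g y mu"
    unfolding D_def by auto
  define d where "d = y - x"
  define r where "r j = f j x - f j y + g j y \<bullet> d" for j
  have rb: "\<bar>r j\<bar> \<le> L / 2 * (norm d)\<^sup>2" if "j < m" for j
  proof -
    have "\<bar>r j\<bar> \<le> Lj j / 2 * (norm (x - y))\<^sup>2"
      using descent[OF grad[OF that] lip[OF that], of x y] that unfolding r_def d_def
      by (simp add: inner_diff_right algebra_simps)
    also have "\<dots> \<le> L / 2 * (norm d)\<^sup>2" using Lj_le[OF that]
      by (simp add: d_def norm_minus_commute mult_right_mono)
    finally show ?thesis .
  qed
  have objeq: "subobj m f g tau x y ka = tau / 2 * (norm (DF_mult m g y ka - a))\<^sup>2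
      - (norm d)\<^sup>2 / (2 * tau) + (\<Sum>j<m. ka j * r j)" for ka
  proof -
    have "(\<Sum>j<m. ka j * (f j x - f j y)) = (\<Sum>j<m. ka j * r j) - DF_mult m g y ka \<bullet> d"
      unfolding r_def DF_mult_def
      by (simp add: inner_sum_left sum_subtractf[symmetric] algebra_simps)
    moreover have "(norm (DF_mult m g y ka - a))\<^sup>2 = (norm (DF_mult m g y ka))\<^sup>2
        - 2 / tau * (DF_mult m g y ka \<bullet> d) + (norm d)\<^sup>2 / tau\<^sup>2"
    proof -
      define w where "w = DF_mult m g y ka"
      have ad: "a = (1/tau) *\<^sub>R d" unfolding a_def d_def ..
      have "(norm (w - a))\<^sup>2 = w \<bullet> w - 2 * (w \<bullet> a) + a \<bullet> a"
        unfolding power2_norm_eq_inner by (simp add: inner_diff_left inner_diff_right inner_commute)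
      also have "w \<bullet> a = (1/tau) * (w \<bullet> d)" unfolding ad by simp
      also have "a \<bullet> a = (norm d)\<^sup>2 / tau\<^sup>2" unfolding ad power2_norm_eq_inner
        by (simp add: power2_eq_square)
      finally show ?thesis unfolding w_def[symmetric] power2_norm_eq_inner by simp
    qed
    ultimately show ?thesis unfolding subobj_def using tau_pos
      by (rule alg)
  qed
  have sumb: "\<bar>\<Sum>j<m. ka j * r j\<bar> \<le> L / 2 * (norm d)\<^sup>2" if "ka \<in> unit_simplex m" for ka
  proof -
    have "\<bar>\<Sum>j<m. ka j * r j\<bar> \<le> (\<Sum>j<m. \<bar>ka j * r j\<bar>)" by (rule sum_abs)
    also have "\<dots> \<le> (\<Sum>j<m. ka j * (L / 2 * (norm d)\<^sup>2))"
    proof (rule sum_mono)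
      fix j assume "j \<in> {..<m}"
      then have j: "j < m" by simp
      have k0: "0 \<le> ka j" using that j unfolding unit_simplex_def by auto
      have "\<bar>ka j * r j\<bar> = ka j * \<bar>r j\<bar>" using k0 by (simp add: abs_mult)
      also have "\<dots> \<le> ka j * (L / 2 * (norm d)\<^sup>2)" using rb[OF j] k0 by (rule mult_left_mono)
      finally show "\<bar>ka j * r j\<bar> \<le> ka j * (L / 2 * (norm d)\<^sup>2)" .
    qed
    also have "\<dots> = (\<Sum>j<m. ka j) * (L / 2 * (norm d)\<^sup>2)"
      by (rule sum_distrib_right[symmetric])
    also have "\<dots> = L / 2 * (norm d)\<^sup>2" using that unfolding unit_simplex_def by simp
    finally show ?thesis .
  qed
  have key: "tau / 2 * ((norm (v - a))\<^sup>2 - (norm (p - a))\<^sup>2) \<le> L * (norm d)\<^sup>2"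
    using lam_min[OF mu(1)] objeq[of lam] objeq[of mu] sumb[OF lam_simplex] sumb[OF mu(1)]
    unfolding v_def[symmetric] mu(2)[symmetric] by (simp add: abs_le_iff algebra_simps)
  have dot: "(a - p) \<bullet> (v - p) \<le> 0"
    unfolding p_def by (rule closest_point_dot[OF Cconv Cclosed vC])
  have "(norm (v - a))\<^sup>2 = (norm (v - p))\<^sup>2 + (norm (p - a))\<^sup>2 - 2 * ((a - p) \<bullet> (v - p))"
    unfolding power2_norm_eq_inner
    by (simp add: inner_diff_left inner_diff_right inner_commute algebra_simps)
  with dot have vp: "(norm (v - p))\<^sup>2 \<le> (norm (v - a))\<^sup>2 - (norm (p - a))\<^sup>2" by simp
  have "tau / 2 * (norm (v - p))\<^sup>2 \<le> tau / 2 * ((norm (v - a))\<^sup>2 - (norm (p - a))\<^sup>2)"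
    using vp tau_pos by (intro mult_left_mono) auto
  with key have t2: "tau / 2 * (norm (v - p))\<^sup>2 \<le> L * (norm d)\<^sup>2" by linarith
  have sq: "(norm (v - p))\<^sup>2 \<le> 2 * L / tau * (norm d)\<^sup>2"
  proof -
    have "(norm (v - p))\<^sup>2 = (2 / tau) * (tau / 2 * (norm (v - p))\<^sup>2)" using tau_pos by simp
    also have "\<dots> \<le> (2 / tau) * (L * (norm d)\<^sup>2)" using t2 tau_pos by (intro mult_left_mono) auto
    finally show ?thesis by simp
  qed
  have "norm (v - p) = sqrt ((norm (v - p))\<^sup>2)" by simp
  also have "\<dots> \<le> sqrt (2 * L / tau * (norm d)\<^sup>2)" using sq by (rule real_sqrt_le_mono)
  also have "\<dots> = sqrt (2 * L / tau) * sqrt ((norm d)\<^sup>2)" by (rule real_sqrt_mult)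
  also have "\<dots> = sqrt (2 * L / tau) * norm d" by simp
  finally show ?thesis
    unfolding v_def p_def C_def a_def L_def d_def by (simp add: norm_minus_commute)
qed

end
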